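(* Let $S$ be a (Hausdorff) topological semigroup such that $S\times S$ is countably compact, and let $\lambda$ be an infinite cardinal. Then $S$ does not contain a subsemigroup isomorphic to the semigroup $B_\lambda$ of $\lambda\times\lambda$-matrix units.
   Context: A topological semigroup is a Hausdorff space with a continuous associative multiplication. For a nonzero cardinal $\lambda$, the semigroup of $\lambda\times\lambda$-matrix units is $B_\lambda=(\lambda\times\lambda)\cup\{0\}$ with $(a,b)\cdot(c,d)=(a,d)$ if $b=c$, $(a,b)\cdot(c,d)=0$ if $b\neq c$, and $0$ a zero element. *)

theory Defs
  imports "HOL-Analysis.Analysis"
begin

text \<open>The semigroup B_L of L x L matrix units: carrier (L x L) plus a zero,
  where the zero is represented by None and (a,b) by Some (a,b).\<close>

definition matrix_units :: "'l set \<Rightarrow> ('l \<times> 'l) option set" where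
  "matrix_units L = insert None (Some ` (L \<times> L))"

fun mu_mult :: "('l \<times> 'l) option \<Rightarrow> ('l \<times> 'l) option \<Rightarrow> ('l \<times> 'l) option" where
  "mu_mult (Some (a, b)) (Some (c, d)) = (if b = c then Some (a, d) else None)"
| "mu_mult _ _ = None"

definition topological_semigroup :: "('a::t2_space \<Rightarrow> 'a \<Rightarrow> 'a) \<Rightarrow> bool" where
  "topological_semigroup m \<longleftrightarrow>
     (\<forall>x y z. m (m x y) z = m x (m y z)) \<and>
     continuous_on UNIV (\<lambda>p. m (fst p) (snd p))"

definition contains_copy_of_matrix_units :: "('a \<Rightarrow> 'a \<Rightarrow> 'a) \<Rightarrow> 'l set \<Rightarrow> bool" where
  "contains_copy_of_matrix_units m L \<longleftrightarrow>
     (\<exists>T h. (\<forall>x\<in>T. \<forall>y\<in>T. m x y \<in> T) \<and>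
            bij_betw h (matrix_units L) T \<and>
            (\<forall>x\<in>matrix_units L. \<forall>y\<in>matrix_units L. h (mu_mult x y) = m (h x) (h y)))"

end

theory Submission
  imports Defs
begin

lemma acc_const:
  fixes f :: "'a::topological_space \<Rightarrow> 'b::t1_space"
  assumes cf: "continuous_on UNIV f" and acc: "\<forall>U. p\<in>U \<and> open U \<longrightarrow> infinite (U\<inter>T)"
    and fin: "finite F" and eq: "\<forall>t\<in>T-F. f t = c"
  shows "f p = c"
proof (rule ccontr)
  assume ne: "f p \<noteq> c"
  have o: "open (f -` (-{c}))" by (rule open_vimage[OF open_Compl[OF closed_singleton] cf])
  have pV: "p \<in> f -` (-{c})" using ne by simp
  have inf: "infinite (f -` (-{c}) \<inter> T)" using acc[rule_format, OF conjI[OF pV o]] .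
  have sub: "f -` (-{c}) \<inter> T \<subseteq> F"
  proof
    fix t assume "t \<in> f -` (-{c}) \<inter> T"
    then have "f t \<noteq> c" "t \<in> T" by auto
    then show "t \<in> F" using eq by blast
  qed
  show False using finite_subset[OF sub fin] inf by simp
qed

lemma cont2:
  assumes "continuous_on UNIV (\<lambda>p. m (fst p) (snd p))"
    and "continuous_on UNIV g1" "continuous_on UNIV g2"
  shows "continuous_on UNIV (\<lambda>p. m (g1 p) (g2 p))"
proof -
  have "continuous_on UNIV ((\<lambda>p. m (fst p) (snd p)) \<circ> (\<lambda>p. (g1 p, g2 p)))"
    by (rule continuous_on_compose[OF continuous_on_Pair[OF assms(2,3)]])
       (rule continuous_on_subset[OF assms(1)], simp)
  then show ?thesis by (simp add: o_def)
qed

theorem theorem4: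
  fixes m :: "'a::t2_space \<Rightarrow> 'a \<Rightarrow> 'a" and L :: "'l set"
  assumes "topological_semigroup m"
    and "countably_compact (UNIV :: ('a \<times> 'a) set)"
    and "infinite L"
  shows "\<not> contains_copy_of_matrix_units m L"
proof
  assume "contains_copy_of_matrix_units m L"
  then obtain T h where bij: "bij_betw h (matrix_units L) T"
    and hom: "\<forall>x\<in>matrix_units L. \<forall>y\<in>matrix_units L. h (mu_mult x y) = m (h x) (h y)"
    unfolding contains_copy_of_matrix_units_def by blast
  have cfst: "continuous_on UNIV (fst :: 'a \<times> 'a \<Rightarrow> 'a)"
    using continuous_on_fst[OF continuous_on_id] by (simp add: id_def)
  have csnd: "continuous_on UNIV (snd :: 'a \<times> 'a \<Rightarrow> 'a)"
    using continuous_on_snd[OF continuous_on_id] by (simp add: id_def)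
  have cm: "continuous_on UNIV (\<lambda>p. m (fst p) (snd p))"
    using assms(1) unfolding topological_semigroup_def by blast
  obtain a :: "nat \<Rightarrow> 'l" where ainj: "inj a" and aL: "range a \<subseteq> L"
    using infinite_countable_subset[OF assms(3)] by blast
  have inj: "inj_on h (matrix_units L)" using bij bij_betw_def by blast
  have memS: "Some (a i, a j) \<in> matrix_units L" for i j
    using aL unfolding matrix_units_def by auto
  have memN: "None \<in> matrix_units L" unfolding matrix_units_def by auto
  define e where "e i j = h (Some (a i, a j))" for i j
  define z where "z = h None"
  have mul: "m (e i j) (e k l) = (if j = k then e i l else z)" for i j k l
  proof -
    have "m (e i j) (e k l) = h (mu_mult (Some (a i, a j)) (Some (a k, a l)))"
      unfolding e_def by (rule hom[rule_format, OF memS memS, symmetric])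
    also have "\<dots> = (if j = k then e i l else z)"
      using ainj by (simp add: e_def z_def inj_eq)
    finally show ?thesis .
  qed
  define g where "g n = (e (Suc n) 0, e 0 (Suc n))" for n
  define A where "A = range g"
  have ginj: "inj g"
  proof
    fix u v assume "g u = g v"
    then have "h (Some (a (Suc u), a 0)) = h (Some (a (Suc v), a 0))"
      by (simp add: g_def e_def)
    then have "Some (a (Suc u), a 0) = Some (a (Suc v), a 0)"
      using inj_onD[OF inj _ memS memS] by blast
    then have "a (Suc u) = a (Suc v)" by simp
    then show "u = v" using ainj by (simp add: inj_eq)
  qed
  have "countable A" unfolding A_def by simp
  moreover have "infinite A" unfolding A_def by (rule range_inj_infinite[OF ginj])
  ultimately obtain p where acc: "\<forall>U. p\<in>U \<and> open U \<longrightarrow> infinite (U \<inter> A)"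
    using countably_compact_imp_acc_point[OF assms(2)] by blast
  obtain x y where p: "p = (x, y)" by (cases p)
  have c1: "m y x = e 0 0"
  proof -
    have eq1: "\<forall>t\<in>A-{}. (\<lambda>q. m (snd q) (fst q)) t = e 0 0"
    proof
      fix t assume "t \<in> A - {}"
      then obtain n where "t = g n" unfolding A_def by auto
      then show "(\<lambda>q. m (snd q) (fst q)) t = e 0 0" by (simp add: g_def mul)
    qed
    have ct1: "continuous_on UNIV (\<lambda>q. m (snd q) (fst q))"
      using cont2[OF cm csnd cfst] by simp
    have "(\<lambda>q. m (snd q) (fst q)) p = e 0 0"
      by (rule acc_const[OF ct1 acc finite.emptyI eq1])
    then show ?thesis using p by simp
  qed
  have c2: "m (e 0 (Suc k)) x = z" for k
  proof -
    have eq2: "\<forall>t\<in>A-{g k}. (\<lambda>q::'a \<times> 'a. m (e 0 (Suc k)) (fst q)) t = z"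
    proof
      fix t assume "t \<in> A - {g k}"
      then obtain n where "t = g n" "n \<noteq> k" unfolding A_def by auto
      then show "(\<lambda>q::'a \<times> 'a. m (e 0 (Suc k)) (fst q)) t = z" by (simp add: g_def mul)
    qed
    have ct2: "continuous_on UNIV (\<lambda>q::'a \<times> 'a. m (e 0 (Suc k)) (fst q))"
      by (rule cont2[OF cm continuous_on_const cfst])
    have "(\<lambda>q::'a \<times> 'a. m (e 0 (Suc k)) (fst q)) p = z"
      by (rule acc_const[OF ct2 acc finite.insertI[OF finite.emptyI] eq2])
    then show ?thesis using p by simp
  qed
  have c3: "m y x = z"
  proof -
    have eq3: "\<forall>t\<in>A-{}. (\<lambda>q::'a \<times> 'a. m (snd q) x) t = z"
    proof
      fix t assume "t \<in> A - {}"
      then obtain n where "t = g n" unfolding A_def by auto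
      then show "(\<lambda>q::'a \<times> 'a. m (snd q) x) t = z" using c2[of n] by (simp add: g_def)
    qed
    have ct3: "continuous_on UNIV (\<lambda>q::'a \<times> 'a. m (snd q) x)"
      by (rule cont2[OF cm csnd continuous_on_const])
    have "(\<lambda>q::'a \<times> 'a. m (snd q) x) p = z"
      by (rule acc_const[OF ct3 acc finite.emptyI eq3])
    then show ?thesis using p by simp
  qed
  have "z = e 0 0" using c1 c3 by simp
  then have "h None = h (Some (a 0, a 0))" unfolding e_def z_def .
  then have "None = Some (a 0, a 0)" using inj_onD[OF inj _ memN memS] by blast
  then show False by simp
qed

end
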